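(* Let $s,t\geq0$ be integers. The isomorphism type generating series of the virtual species $\mathcal Q^{s,t}(X,X,X)$ is \[ \widetilde{\mathcal Q^{s,t}}(x)=\frac{(1-x^{s+2})(1-x^{t+2})}{1-x}-1, \] and the isomorphism type generating series of the virtual species $X^2-[t>0]X^2-[s>0]\mathcal E_2(X)$ is $x^2-[t>0]x^2-[s>0]x^2$. In particular both are symmetric in $s$ and $t$.
   Context: Species and virtual species and their operations are as in the theory of combinatorial species. For a species $F$ the cycle index series is $Z_F=\sum_{n\ge0}\frac1{n!}\sum_{\sigma\in\mathfrak S_n}\mathrm{fix}\,F[\sigma]\,p_1^{\sigma_1}p_2^{\sigma_2}\cdots$ (with $\sigma_k$ the number of $k$-cycles of $\sigma$), extended additively to virtual species; the isomorphism type generating series $\widetilde F(x)$ is obtained by substituting $p_k=x^k$ (for an actual species it counts isomorphism types by size). $X,Y,Z$ are singleton species of three sorts; $1=\mathcal E_0$; $\mathcal E$ is the species of sets, $\mathcal E_n$, $\mathcal E_{m\leq\bullet<n}$, $\mathcal E_{<n}$ its restrictions to sets of size $n$, sizes $m,\dots,n-1$, sizes $<n$; $\mathcal E(-X)$ is the multiplicative inverse of $\mathcal E(X)$; $[P]$ is the Iverson bracket. $\mathcal Q^{s,t}(X,Y,Z)=\big(1+X+\mathcal E_{2\leq\bullet<2+s}(Z)\big)\,\mathcal E\big(X(\mathcal E_{<1+t}(Y)\mathcal E(-X)-1)\big)-1$. *)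

theory Defs
  imports "HOL-Library.Multiset" "HOL-Computational_Algebra.Formal_Power_Series"
begin

text \<open>A monomial p_1^{a_1} p_2^{a_2} ... is encoded by the multiset of cycle lengths
  (a_k copies of k); a cycle index series is its coefficient function.\<close>

type_synonym cis = "nat multiset \<Rightarrow> rat"

text \<open>z_lambda = prod_i i^{m_i} m_i!  (number of permutations commuting with one of cycle type lambda)\<close>
definition zee :: "nat multiset \<Rightarrow> rat" where
  "zee l = (\<Prod>i\<in>set_mset l. of_nat i ^ count l i * fact (count l i))"

definition cis_zero :: cis where "cis_zero = (\<lambda>l. 0)"
definition cis_one :: cis where "cis_one = (\<lambda>l. if l = {#} then 1 else 0)"
definition cis_X :: cis where "cis_X = (\<lambda>l. if l = {#1#} then 1 else 0)"

definition cis_add :: "cis \<Rightarrow> cis \<Rightarrow> cis" where "cis_add F G = (\<lambda>l. F l + G l)"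
definition cis_diff :: "cis \<Rightarrow> cis \<Rightarrow> cis" where "cis_diff F G = (\<lambda>l. F l - G l)"
definition cis_smul :: "rat \<Rightarrow> cis \<Rightarrow> cis" where "cis_smul c F = (\<lambda>l. c * F l)"

text \<open>Product of species: product of cycle index series (p^mu p^nu = p^(mu+nu)).\<close>
definition cis_mul :: "cis \<Rightarrow> cis \<Rightarrow> cis" where
  "cis_mul F G = (\<lambda>l. \<Sum>m\<in>{m. m \<subseteq># l}. F m * G (l - m))"

definition cis_prod_list :: "cis list \<Rightarrow> cis" where
  "cis_prod_list Fs = foldr cis_mul Fs cis_one"

definition cis_E_range :: "nat \<Rightarrow> nat \<Rightarrow> cis" where
  "cis_E_range m n = (\<lambda>l. if 0 \<notin># l \<and> m \<le> sum_mset l \<and> sum_mset l < n then 1 / zee l else 0)"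

definition cis_E :: cis where
  "cis_E = (\<lambda>l. if 0 \<notin># l then 1 / zee l else 0)"

definition cis_E_n :: "nat \<Rightarrow> cis" where "cis_E_n n = cis_E_range n (Suc n)"
definition cis_E_less :: "nat \<Rightarrow> cis" where "cis_E_less n = cis_E_range 0 n"

text \<open>E(-X): the multiplicative inverse of E(X).\<close>
definition cis_E_negX :: cis where
  "cis_E_negX = (THE G. cis_mul cis_E G = cis_one)"

text \<open>G^(k)(p_1,p_2,...) = G(p_k,p_{2k},...).\<close>
definition cis_stretch :: "nat \<Rightarrow> cis \<Rightarrow> cis" where
  "cis_stretch k G = (\<lambda>l. if (\<forall>j\<in>#l. k dvd j) then G (image_mset (\<lambda>j. j div k) l) else 0)"

text \<open>Plethystic substitution Z_{F o G} = Z_F(Z_G^(1), Z_G^(2), ...) (for G with zero constant term);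
  only monomials mu with |mu| <= |lambda| can contribute to the coefficient of p^lambda.\<close>
definition cis_comp :: "cis \<Rightarrow> cis \<Rightarrow> cis" where
  "cis_comp F G = (\<lambda>l. \<Sum>m\<in>{m. set_mset m \<subseteq> {1..sum_mset l} \<and> size m \<le> sum_mset l}.
      F m * cis_prod_list (map (\<lambda>k. cis_stretch k G) (sorted_list_of_multiset m)) l)"

text \<open>Isomorphism type generating series: substitute p_k = x^k.\<close>
definition cis_tilde :: "cis \<Rightarrow> rat fps" where
  "cis_tilde F = Abs_fps (\<lambda>n. \<Sum>l\<in>{l. set_mset l \<subseteq> {1..n} \<and> size l \<le> n \<and> sum_mset l = n}. F l)"

definition Q_XXX :: "nat \<Rightarrow> nat \<Rightarrow> cis" where
  "Q_XXX s t = cis_diff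
     (cis_mul (cis_add (cis_add cis_one cis_X) (cis_comp (cis_E_range 2 (2 + s)) cis_X))
              (cis_comp cis_E (cis_mul cis_X (cis_diff (cis_mul (cis_comp (cis_E_less (1 + t)) cis_X) cis_E_negX) cis_one))))
     cis_one"

end

theory Submission
  imports Defs
begin



definition parts :: "nat \<Rightarrow> nat multiset set" where
  "parts n = {l. 0 \<notin># l \<and> sum_mset l = n}"

lemma size_le_sum: "0 \<notin># l \<Longrightarrow> size l \<le> sum_mset (l::nat multiset)"
proof (induction l)
  case (add x l)
  then have "x \<noteq> 0" "size l \<le> sum_mset l" by auto
  then show ?case by simp
qed simp

lemma mem_le_sum: "k \<in># l \<Longrightarrow> k \<le> sum_mset (l::nat multiset)"
  by (metis insert_DiffM le_add1 sum_mset.add_mset)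

lemma tilde_set: "{l. set_mset l \<subseteq> {1..n} \<and> size l \<le> n \<and> sum_mset l = n} = parts n"
proof (intro set_eqI iffI)
  fix x assume "x \<in> {l. set_mset l \<subseteq> {1..n} \<and> size l \<le> n \<and> sum_mset l = n}"
  then show "x \<in> parts n" unfolding parts_def by auto
next
  fix x assume x: "x \<in> parts n"
  then have "0 \<notin># x" "sum_mset x = n" unfolding parts_def by auto
  moreover have "k \<in> {1..n}" if "k \<in># x" for k
    using that mem_le_sum[of k x] \<open>0 \<notin># x\<close> \<open>sum_mset x = n\<close>
    by (cases k) auto
  ultimately show "x \<in> {l. set_mset l \<subseteq> {1..n} \<and> size l \<le> n \<and> sum_mset l = n}"
    using size_le_sum[of x] by auto
qed

lemma bounded_finite:
  assumes "finite A" shows "finite {m::'a multiset. set_mset m \<subseteq> A \<and> size m \<le> n}"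
proof -
  have "{m::'a multiset. set_mset m \<subseteq> A \<and> size m \<le> n} = (\<Union>j\<le>n. multisets_of_size A j)"
    by (auto simp: multisets_of_size_def)
  then show ?thesis using assms by auto
qed

lemma finite_parts: "finite (parts n)"
proof -
  have "parts n \<subseteq> {m. set_mset m \<subseteq> {1..n} \<and> size m \<le> n}"
    using tilde_set by blast
  then show ?thesis using bounded_finite[of "{1..n}" n] finite_subset by blast
qed

lemma finite_sub: "finite {m. m \<subseteq># (l::'a multiset)}"
proof -
  have "{m. m \<subseteq># l} \<subseteq> {m. set_mset m \<subseteq> set_mset l \<and> size m \<le> size l}"
    by (auto simp: size_mset_mono dest: mset_subset_eqD)
  then show ?thesis using bounded_finite[of "set_mset l" "size l"] finite_subset by blast
qed

lemma tilde_nth: "fps_nth (cis_tilde F) n = (\<Sum>l\<in>parts n. F l)"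
  unfolding cis_tilde_def tilde_set by simp

lemma tilde_add: "cis_tilde (cis_add F G) = cis_tilde F + cis_tilde G"
  by (rule fps_ext) (simp add: tilde_nth cis_add_def sum.distrib)

lemma tilde_diff: "cis_tilde (cis_diff F G) = cis_tilde F - cis_tilde G"
  by (rule fps_ext) (simp add: tilde_nth cis_diff_def sum_subtractf)

lemma tilde_smul: "cis_tilde (cis_smul c F) = fps_const c * cis_tilde F"
  by (rule fps_ext) (simp add: tilde_nth cis_smul_def sum_distrib_left)

lemma parts_0: "parts 0 = {{#}}"
  by (auto simp: parts_def) (metis multiset_nonemptyE)

lemma tilde_one: "cis_tilde cis_one = 1"
proof (rule fps_ext)
  fix n
  show "fps_nth (cis_tilde cis_one) n = fps_nth 1 n"
  proof (cases n)
    case 0 then show ?thesis by (simp add: tilde_nth parts_0 cis_one_def)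
  next
    case (Suc k)
    have "(\<Sum>l\<in>parts n. cis_one l) = 0"
      by (rule sum.neutral) (auto simp: cis_one_def parts_def Suc)
    then show ?thesis by (simp add: tilde_nth Suc)
  qed
qed

lemma tilde_X: "cis_tilde cis_X = fps_X"
proof (rule fps_ext)
  fix n
  have "(\<Sum>l\<in>parts n. cis_X l) = (if n = 1 then 1 else 0)"
  proof (cases "n = 1")
    case True
    have "(\<Sum>l\<in>parts n. cis_X l) = (\<Sum>l\<in>{{#1#}}. cis_X l)"
      by (rule sum.mono_neutral_right[OF finite_parts]) (auto simp: cis_X_def parts_def True)
    then show ?thesis using True by (simp add: cis_X_def)
  next
    case False
    have "cis_X l = 0" if "l \<in> parts n" for l
      using that False unfolding cis_X_def parts_def by auto
    then show ?thesis using False by simp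
  qed
  then show "fps_nth (cis_tilde cis_X) n = fps_nth fps_X n" by (simp only: tilde_nth fps_X_nth)
qed

lemma tilde_mul: "cis_tilde (cis_mul F G) = cis_tilde F * cis_tilde G"
proof (rule fps_ext)
  fix n
  have "(\<Sum>i\<le>n. (\<Sum>m\<in>parts i. F m) * (\<Sum>r\<in>parts (n-i). G r))
      = (\<Sum>i\<le>n. \<Sum>m\<in>parts i. \<Sum>r\<in>parts (n-i). F m * G r)"
    by (simp add: sum_product)
  also have "\<dots> = (\<Sum>(i,m,r)\<in>(SIGMA i:{..n}. parts i \<times> parts (n-i)). F m * G r)"
    by (simp add: sum.Sigma finite_parts sum.cartesian_product)
  also have "\<dots> = (\<Sum>(l,m)\<in>(SIGMA l:parts n. {m. m \<subseteq># l}). F m * G (l - m))"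
  proof (rule sum.reindex_bij_witness[where j = "\<lambda>(i,m,r). (m + r, m)"
        and i = "\<lambda>(l,m). (sum_mset m, m, l - m)"])
    fix a assume "a \<in> (SIGMA i:{..n}. parts i \<times> parts (n-i))"
    then show "(case case a of (i, m, r) \<Rightarrow> (m + r, m) of (l, m) \<Rightarrow> (sum_mset m, m, l - m)) = a"
      "(case a of (i, m, r) \<Rightarrow> (m + r, m)) \<in> (SIGMA l:parts n. {m. m \<subseteq># l})"
      "(case case a of (i, m, r) \<Rightarrow> (m + r, m) of (l, m) \<Rightarrow> F m * G (l - m)) = (case a of (i, m, r) \<Rightarrow> F m * G r)"
      by (auto simp: parts_def)
  next
    fix b assume b: "b \<in> (SIGMA l:parts n. {m. m \<subseteq># l})"
    then obtain l m where lm: "b = (l,m)" "l \<in> parts n" "m \<subseteq># l" by auto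
    have s: "sum_mset l = sum_mset m + sum_mset (l - m)"
      using lm(3) by (metis subset_mset.add_diff_inverse sum_mset.union)
    show "(case case b of (l, m) \<Rightarrow> (sum_mset m, m, l - m) of (i, m, r) \<Rightarrow> (m + r, m)) = b"
      using lm by auto
    show "(case b of (l, m) \<Rightarrow> (sum_mset m, m, l - m)) \<in> (SIGMA i:{..n}. parts i \<times> parts (n-i))"
      using lm s by (auto simp: parts_def dest: mset_subset_eqD in_diffD)
  qed
  also have "\<dots> = (\<Sum>l\<in>parts n. \<Sum>m\<in>{m. m \<subseteq># l}. F m * G (l - m))"
    by (simp add: sum.Sigma finite_parts finite_sub)
  finally show "fps_nth (cis_tilde (cis_mul F G)) n = fps_nth (cis_tilde F * cis_tilde G) n"
    by (simp add: tilde_nth fps_mult_nth cis_mul_def atLeast0AtMost)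
qed


lemma stretch_X: "k > 0 \<Longrightarrow> cis_stretch k cis_X = (\<lambda>l. if l = {#k#} then 1 else 0)"
proof (rule ext)
  fix l assume k: "k > 0"
  show "cis_stretch k cis_X l = (if l = {#k#} then 1 else 0)"
  proof (cases "l = {#k#}")
    case True then show ?thesis using k by (simp add: cis_stretch_def cis_X_def)
  next
    case False
    have "image_mset (\<lambda>j. j div k) l \<noteq> {#1#}" if "\<forall>j\<in>#l. k dvd j"
    proof
      assume h: "image_mset (\<lambda>j. j div k) l = {#1#}"
      then have "size l = 1" by (metis size_image_mset size_single)
      then obtain a where a: "l = {#a#}" using size_1_singleton_mset by blast
      then have "a div k = 1" "k dvd a" using h that by auto
      then have "a = k" by (metis dvd_mult_div_cancel mult.right_neutral)
      then show False using a False by simp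
    qed
    then show ?thesis using False by (auto simp: cis_stretch_def cis_X_def)
  qed
qed

lemma mul_ind: "cis_mul (\<lambda>l. if l = {#k#} then 1 else 0) (\<lambda>l. if l = M then 1 else 0)
   = (\<lambda>l. if l = add_mset k M then 1 else 0)"
proof (rule ext)
  fix l
  have "cis_mul (\<lambda>l. if l = {#k#} then 1 else 0) (\<lambda>l. if l = M then 1 else 0) l
     = (\<Sum>m\<in>{m. m \<subseteq># l}. if m = {#k#} then (if l - m = M then 1 else 0) else 0)"
    unfolding cis_mul_def by (intro sum.cong) auto
  also have "\<dots> = (if {#k#} \<subseteq># l then (if l - {#k#} = M then 1 else 0) else 0)"
    by (simp add: finite_sub)
  also have "\<dots> = (if l = add_mset k M then 1 else 0)"
    by (auto simp: insert_subset_eq_iff)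
  finally show "cis_mul (\<lambda>l. if l = {#k#} then 1 else 0) (\<lambda>l. if l = M then 1 else 0) l
     = (if l = add_mset k M then 1 else 0)" .
qed

lemma prod_ind: "\<forall>k\<in>set ks. k > 0 \<Longrightarrow>
  cis_prod_list (map (\<lambda>k. cis_stretch k cis_X) ks) = (\<lambda>l. if l = mset ks then 1 else 0)"
proof (induction ks)
  case Nil then show ?case by (simp add: cis_prod_list_def cis_one_def)
next
  case (Cons k ks)
  then have "cis_prod_list (map (\<lambda>k. cis_stretch k cis_X) (k # ks))
     = cis_mul (\<lambda>l. if l = {#k#} then 1 else 0) (\<lambda>l. if l = mset ks then 1 else 0)"
    by (simp add: cis_prod_list_def stretch_X)
  then show ?case by (simp add: mul_ind)
qed

lemma comp_X: assumes "0 \<notin># l" shows "cis_comp F cis_X l = F l"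
proof -
  let ?I = "{m. set_mset m \<subseteq> {1..sum_mset l} \<and> size m \<le> sum_mset l}"
  have "cis_comp F cis_X l = (\<Sum>m\<in>?I. if m = l then F m else 0)"
    unfolding cis_comp_def
  proof (intro sum.cong refl)
    fix m assume "m \<in> ?I"
    then have "\<forall>k\<in>set (sorted_list_of_multiset m). k > 0" by auto
    then show "F m * cis_prod_list (map (\<lambda>k. cis_stretch k cis_X) (sorted_list_of_multiset m)) l
        = (if m = l then F m else 0)" by (auto simp: prod_ind)
  qed
  also have "\<dots> = F l"
  proof -
    have "l \<in> parts (sum_mset l)" using assms by (simp add: parts_def)
    then have "l \<in> ?I" using tilde_set[of "sum_mset l"] by blast
    moreover have "finite ?I" by (rule bounded_finite) simp
    ultimately show ?thesis by (simp add: if_distrib cong: if_cong)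
  qed
  finally show ?thesis .
qed

lemma tilde_comp_X: "cis_tilde (cis_comp F cis_X) = cis_tilde F"
  by (rule fps_ext) (simp add: tilde_nth parts_def comp_X)


lemma tilde_prod_list: "cis_tilde (cis_prod_list Fs) = prod_list (map cis_tilde Fs)"
  by (induction Fs) (simp_all add: cis_prod_list_def tilde_one tilde_mul)

definition Ib :: "nat \<Rightarrow> nat multiset set" where
  "Ib n = {m. set_mset m \<subseteq> {1..n} \<and> size m \<le> n}"

lemma finite_Ib: "finite (Ib n)"
  unfolding Ib_def by (rule bounded_finite) simp

lemma tilde_comp: "fps_nth (cis_tilde (cis_comp F G)) n =
  (\<Sum>m\<in>Ib n. F m * fps_nth (prod_list (map (\<lambda>k. cis_tilde (cis_stretch k G)) (sorted_list_of_multiset m))) n)"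
proof -
  let ?P = "\<lambda>m. cis_prod_list (map (\<lambda>k. cis_stretch k G) (sorted_list_of_multiset m))"
  have "fps_nth (cis_tilde (cis_comp F G)) n = (\<Sum>l\<in>parts n. \<Sum>m\<in>Ib n. F m * ?P m l)"
    unfolding tilde_nth cis_comp_def
    by (intro sum.cong refl) (simp add: parts_def Ib_def)
  also have "\<dots> = (\<Sum>m\<in>Ib n. \<Sum>l\<in>parts n. F m * ?P m l)"
    by (rule sum.swap)
  also have "\<dots> = (\<Sum>m\<in>Ib n. F m * fps_nth (cis_tilde (?P m)) n)"
    by (simp add: tilde_nth sum_distrib_left)
  also have "\<dots> = (\<Sum>m\<in>Ib n. F m * fps_nth (prod_list (map (\<lambda>k. cis_tilde (cis_stretch k G)) (sorted_list_of_multiset m))) n)"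
    by (simp add: tilde_prod_list o_def)
  finally show ?thesis .
qed

lemma dvd_sum_mset: "\<forall>j\<in>#l. k dvd j \<Longrightarrow> (k::nat) dvd sum_mset l"
  by (induction l) auto

lemma tilde_stretch:
  assumes k: "k > 0"
  shows "cis_tilde (cis_stretch k G) = Abs_fps (\<lambda>n. if k dvd n then fps_nth (cis_tilde G) (n div k) else 0)"
proof (rule fps_ext)
  fix n
  let ?S = "{l\<in>parts n. \<forall>j\<in>#l. k dvd j}"
  have "fps_nth (cis_tilde (cis_stretch k G)) n = (\<Sum>l\<in>?S. G (image_mset (\<lambda>j. j div k) l))"
    unfolding tilde_nth cis_stretch_def by (simp add: sum.inter_filter finite_parts)
  also have "\<dots> = (if k dvd n then fps_nth (cis_tilde G) (n div k) else 0)"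
  proof (cases "k dvd n")
    case False
    then have "?S = {}" using dvd_sum_mset by (auto simp: parts_def)
    then show ?thesis using False by (simp only: sum.empty) simp
  next
    case True
    have "(\<Sum>l\<in>parts (n div k). G l) = (\<Sum>l\<in>?S. G (image_mset (\<lambda>j. j div k) l))"
    proof (rule sum.reindex_bij_witness[where j = "image_mset (\<lambda>j. j * k)" and i = "image_mset (\<lambda>j. j div k)"])
      fix a assume a: "a \<in> parts (n div k)"
      show "image_mset (\<lambda>j. j div k) (image_mset (\<lambda>j. j * k) a) = a"
        using k by (simp add: multiset.map_comp o_def)
      then show "G (image_mset (\<lambda>j. j div k) (image_mset (\<lambda>j. j * k) a)) = G a" by simp
      have "sum_mset (image_mset (\<lambda>j. j * k) a) = sum_mset a * k"
        by (induction a) (auto simp: algebra_simps)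
      then show "image_mset (\<lambda>j. j * k) a \<in> ?S"
        using a k True by (auto simp: parts_def)
    next
      fix b assume b: "b \<in> ?S"
      then have dv: "\<forall>j\<in>#b. k dvd j" and b0: "0 \<notin># b" and bs: "sum_mset b = n"
        by (auto simp: parts_def)
      show "image_mset (\<lambda>j. j * k) (image_mset (\<lambda>j. j div k) b) = b"
        using dv by (simp add: multiset.map_comp o_def cong: image_mset_cong)
      have "sum_mset (image_mset (\<lambda>j. j div k) b) * k = sum_mset (image_mset (\<lambda>j. j div k * k) b)"
        by (induction b) (auto simp: algebra_simps)
      also have "\<dots> = sum_mset b" using dv by (simp cong: image_mset_cong)
      finally have "sum_mset (image_mset (\<lambda>j. j div k) b) = n div k" using bs k by (metis nonzero_mult_div_cancel_right not_gr0)
      moreover have "0 \<notin># image_mset (\<lambda>j. j div k) b"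
        using dv b0 k by (auto elim!: dvdE)
      ultimately show "image_mset (\<lambda>j. j div k) b \<in> parts (n div k)" by (simp add: parts_def)
    qed
    then show ?thesis using True by (simp add: tilde_nth)
  qed
  finally show "fps_nth (cis_tilde (cis_stretch k G)) n =
    fps_nth (Abs_fps (\<lambda>n. if k dvd n then fps_nth (cis_tilde G) (n div k) else 0)) n" by simp
qed


lemma sum_count_gen: "finite A \<Longrightarrow> set_mset l \<subseteq> A \<Longrightarrow> (\<Sum>k\<in>A. count l k * k) = sum_mset (l::nat multiset)"
proof (induction l)
  case empty then show ?case by simp
next
  case (add x l)
  then have x: "x \<in> A" and IH: "(\<Sum>k\<in>A. count l k * k) = sum_mset l" by auto
  have "(\<Sum>k\<in>A. count (add_mset x l) k * k) = (\<Sum>k\<in>A. count l k * k + (if k = x then x else 0))"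
    by (intro sum.cong) auto
  also have "\<dots> = sum_mset l + x" using x add.prems(1) by (simp add: sum.distrib IH)
  finally show ?case by simp
qed

lemma zee_empty: "zee {#} = 1" by (simp add: zee_def)

lemma zee_add: "zee (add_mset k l) = zee l * of_nat k * of_nat (count l k + 1)"
proof (cases "k \<in># l")
  case True
  let ?f = "\<lambda>i c. (of_nat i :: rat) ^ c * fact c"
  have "zee (add_mset k l) = (\<Prod>i\<in>set_mset l. ?f i (count (add_mset k l) i))"
    using True by (simp add: zee_def insert_absorb)
  also have "\<dots> = ?f k (count l k + 1) * (\<Prod>i\<in>set_mset l - {k}. ?f i (count (add_mset k l) i))"
    using True by (simp add: prod.remove)
  also have "(\<Prod>i\<in>set_mset l - {k}. ?f i (count (add_mset k l) i)) = (\<Prod>i\<in>set_mset l - {k}. ?f i (count l i))"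
    by (intro prod.cong) auto
  also have "zee l = ?f k (count l k) * (\<Prod>i\<in>set_mset l - {k}. ?f i (count l i))"
    using True by (simp add: zee_def prod.remove)
  moreover have "?f k (count l k + 1) = ?f k (count l k) * of_nat k * of_nat (count l k + 1)"
    by (simp add: algebra_simps)
  ultimately show ?thesis by (simp add: algebra_simps)
next
  case False
  let ?f = "\<lambda>i c. (of_nat i :: rat) ^ c * fact c"
  have "zee (add_mset k l) = ?f k (count (add_mset k l) k) * (\<Prod>i\<in>set_mset l. ?f i (count (add_mset k l) i))"
    using False by (simp add: zee_def)
  also have "(\<Prod>i\<in>set_mset l. ?f i (count (add_mset k l) i)) = zee l"
    unfolding zee_def using False by (intro prod.cong) auto
  moreover have "count l k = 0" using False by (simp add: count_eq_zero_iff)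
  ultimately show ?thesis by simp
qed

lemma zee_ne0: "0 \<notin># l \<Longrightarrow> zee l \<noteq> 0"
  unfolding zee_def by (auto simp: prod_zero_iff)

definition csum :: "rat \<Rightarrow> nat \<Rightarrow> rat" where
  "csum \<sigma> n = (\<Sum>l\<in>parts n. \<sigma> ^ size l / zee l)"

lemma key_point:
  assumes l: "l \<in> parts n"
  shows "\<sigma> ^ size l * (of_nat n / zee l) = (\<Sum>k\<in>set_mset l. \<sigma> * (\<sigma> ^ size (l - {#k#}) / zee (l - {#k#})))"
proof -
  have l0: "0 \<notin># l" and ls: "sum_mset l = n" using l by (auto simp: parts_def)
  have z: "zee l \<noteq> 0" using zee_ne0[OF l0] .
  have tm: "\<sigma> * (\<sigma> ^ size (l - {#k#}) / zee (l - {#k#})) = \<sigma> ^ size l * (of_nat (count l k * k) / zee l)"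
    if k: "k \<in># l" for k
  proof -
    have eq: "l = add_mset k (l - {#k#})" using k by simp
    have c: "count (l - {#k#}) k + 1 = count l k" using k by (simp add: count_eq_zero_iff)
    have zl: "zee l = zee (l - {#k#}) * of_nat k * of_nat (count l k)"
      using zee_add[of k "l - {#k#}"] eq c by simp
    have sz: "size l = Suc (size (l - {#k#}))" using k by (metis size_add_mset insert_DiffM)
    have k0: "k \<noteq> 0" using k l0 by metis
    have ck: "count l k \<noteq> 0" using k by simp
    have zl': "zee (l - {#k#}) \<noteq> 0" using zl z by auto
    show ?thesis using zl sz k0 ck zl' z by (simp add: field_simps)
  qed
  have "(\<Sum>k\<in>set_mset l. \<sigma> * (\<sigma> ^ size (l - {#k#}) / zee (l - {#k#})))
      = (\<Sum>k\<in>set_mset l. \<sigma> ^ size l * (of_nat (count l k * k) / zee l))"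
    using tm by (intro sum.cong) auto
  also have "\<dots> = \<sigma> ^ size l * (of_nat (\<Sum>k\<in>set_mset l. count l k * k) / zee l)"
    by (simp add: sum_distrib_left sum_divide_distrib)
  also have "(\<Sum>k\<in>set_mset l. count l k * k) = n"
    using sum_count_gen[of "set_mset l" l] ls by simp
  finally show ?thesis by simp
qed

lemma csum_rec: "of_nat n * csum \<sigma> n = \<sigma> * (\<Sum>j<n. csum \<sigma> j)"
proof -
  have "of_nat n * csum \<sigma> n = (\<Sum>l\<in>parts n. \<sigma> ^ size l * (of_nat n / zee l))"
    unfolding csum_def sum_distrib_left by (intro sum.cong) (auto simp: field_simps)
  also have "\<dots> = (\<Sum>l\<in>parts n. \<Sum>k\<in>set_mset l. \<sigma> * (\<sigma> ^ size (l - {#k#}) / zee (l - {#k#})))"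
    using key_point by (intro sum.cong) auto
  also have "\<dots> = (\<Sum>(l,k)\<in>(SIGMA l:parts n. set_mset l). \<sigma> * (\<sigma> ^ size (l - {#k#}) / zee (l - {#k#})))"
    by (simp add: sum.Sigma finite_parts)
  also have "\<dots> = (\<Sum>(j,l')\<in>(SIGMA j:{..<n}. parts j). \<sigma> * (\<sigma> ^ size l' / zee l'))"
  proof (rule sum.reindex_bij_witness[where i = "\<lambda>(j,l'). (add_mset (n-j) l', n-j)"
        and j = "\<lambda>(l,k). (n-k, l - {#k#})"])
    fix a assume a: "a \<in> (SIGMA l:parts n. set_mset l)"
    then obtain l k where lk: "a = (l,k)" "l \<in> parts n" "k \<in># l" by auto
    have kn: "k \<le> n" using lk mem_le_sum[of k l] by (auto simp: parts_def)
    have "0 \<notin># l" using lk by (simp add: parts_def)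
    then have k0: "k \<noteq> 0" using lk(3) by metis
    then have "0 < k" by simp
    have s: "sum_mset l = k + sum_mset (l - {#k#})" using lk(3) by (simp add: sum_mset.remove)
    show "(case case a of (l, k) \<Rightarrow> (n - k, l - {#k#}) of (j, l') \<Rightarrow> (add_mset (n - j) l', n - j)) = a"
      using lk kn by simp
    show "(case a of (l, k) \<Rightarrow> (n - k, l - {#k#})) \<in> (SIGMA j:{..<n}. parts j)"
      using lk kn \<open>0 < k\<close> s by (auto simp: parts_def dest: in_diffD)
    show "(case case a of (l, k) \<Rightarrow> (n - k, l - {#k#}) of (j, l') \<Rightarrow> \<sigma> * (\<sigma> ^ size l' / zee l')) =
         (case a of (l, k) \<Rightarrow> \<sigma> * (\<sigma> ^ size (l - {#k#}) / zee (l - {#k#})))"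
      using lk by simp
  next
    fix b assume b: "b \<in> (SIGMA j:{..<n}. parts j)"
    then obtain j l' where jl: "b = (j,l')" "j < n" "l' \<in> parts j" by auto
    show "(case case b of (j, l') \<Rightarrow> (add_mset (n - j) l', n - j) of (l, k) \<Rightarrow> (n - k, l - {#k#})) = b"
      using jl by simp
    show "(case b of (j, l') \<Rightarrow> (add_mset (n - j) l', n - j)) \<in> (SIGMA l:parts n. set_mset l)"
      using jl by (auto simp: parts_def)
  qed
  also have "\<dots> = \<sigma> * (\<Sum>j<n. csum \<sigma> j)"
    by (simp add: sum.Sigma[symmetric] finite_parts csum_def sum_distrib_left)
  finally show ?thesis .
qed

lemma csum_0: "csum \<sigma> 0 = 1"
  by (simp add: csum_def parts_0 zee_empty)

lemma csum_one: "csum 1 n = 1"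
proof (induction n rule: less_induct)
  case (less n)
  show ?case
  proof (cases n)
    case 0 then show ?thesis by (simp add: csum_0)
  next
    case (Suc m)
    have "of_nat n * csum 1 n = (\<Sum>j<n. csum 1 j)" using csum_rec[of n 1] by simp
    also have "\<dots> = of_nat n" using less by simp
    finally show ?thesis using Suc by simp
  qed
qed

lemma sum_bfun: "(\<Sum>j<(n::nat). (if j = 0 then 1 else if j = 1 then -1 else 0 :: rat))
   = (if n = 1 then 1 else 0)"
  by (induction n) auto

lemma csum_neg: "csum (-1) n = (if n = 0 then 1 else if n = 1 then -1 else 0)"
proof (induction n rule: less_induct)
  case (less n)
  show ?case
  proof (cases n)
    case 0 then show ?thesis by (simp add: csum_0)
  next
    case (Suc m)
    have "of_nat n * csum (-1) n = - (\<Sum>j<n. csum (-1) j)" using csum_rec[of n "-1"] by simp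
    also have "(\<Sum>j<n. csum (-1) j) = (\<Sum>j<n. (if j = 0 then 1 else if j = 1 then -1 else 0 :: rat))"
      using less by (intro sum.cong) auto
    finally show ?thesis using Suc sum_bfun[of n] by (auto split: if_splits)
  qed
qed


function negrec :: "nat multiset \<Rightarrow> rat" where
  "negrec l = (if l = {#} then 1 else - (\<Sum>m\<in>{m. m \<subseteq># l \<and> m \<noteq> {#}}. cis_E m * negrec (l - m)))"
  by auto
termination
proof (relation "measure size")
  fix l m assume "\<not> l = {#}" "m \<in> {m. m \<subseteq># l \<and> m \<noteq> {#}}"
  then have "m \<subseteq># l" "m \<noteq> {#}" by auto
  then show "(l - m, l) \<in> measure size"
    by (simp add: size_Diff_submset) (metis diff_less nonempty_has_size size_mset_mono neq0_conv le_zero_eq)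
qed simp

declare negrec.simps [simp del]

lemma cis_E_empty: "cis_E {#} = 1" by (simp add: cis_E_def zee_empty)

lemma sub_split: "{m. m \<subseteq># l} = insert {#} {m. m \<subseteq># l \<and> m \<noteq> {#}}" by auto

lemma mul_E_eq: "cis_mul cis_E G l = G l + (\<Sum>m\<in>{m. m \<subseteq># l \<and> m \<noteq> {#}}. cis_E m * G (l - m))"
proof -
  have fin: "finite {m. m \<subseteq># l \<and> m \<noteq> {#}}" using finite_sub[of l] by (rule finite_subset[rotated]) auto
  show ?thesis unfolding cis_mul_def sub_split using fin by (simp add: cis_E_empty)
qed

lemma mul_negrec: "cis_mul cis_E negrec = cis_one"
proof (rule ext)
  fix l
  show "cis_mul cis_E negrec l = cis_one l"
  proof (cases "l = {#}")
    case True
    then have "{m. m \<subseteq># l \<and> m \<noteq> {#}} = {}" by auto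
    then show ?thesis using True by (simp add: mul_E_eq cis_one_def negrec.simps)
  next
    case False
    then show ?thesis by (simp add: mul_E_eq cis_one_def negrec.simps[of l])
  qed
qed

lemma negrec_unique: "cis_mul cis_E G = cis_one \<Longrightarrow> G = negrec"
proof (rule ext)
  fix l assume h: "cis_mul cis_E G = cis_one"
  show "G l = negrec l"
  proof (induction l rule: full_multiset_induct)
    case (less B)
    have eq: "G B = cis_one B - (\<Sum>m\<in>{m. m \<subseteq># B \<and> m \<noteq> {#}}. cis_E m * G (B - m))"
      using mul_E_eq[of G B] h by simp
    have "(\<Sum>m\<in>{m. m \<subseteq># B \<and> m \<noteq> {#}}. cis_E m * G (B - m)) = (\<Sum>m\<in>{m. m \<subseteq># B \<and> m \<noteq> {#}}. cis_E m * negrec (B - m))"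
    proof (intro sum.cong refl)
      fix m assume "m \<in> {m. m \<subseteq># B \<and> m \<noteq> {#}}"
      then have "m \<subseteq># B" "m \<noteq> {#}" by auto
      then have "B - m \<subset># B"
        by (metis add_cancel_left_right diff_subset_eq_self subset_mset.diff_add subset_mset.strict_iff_order)
      then show "cis_E m * G (B - m) = cis_E m * negrec (B - m)" using less by simp
    qed
    then show ?case using eq
      by (cases "B = {#}") (auto simp: cis_one_def negrec.simps[of B] negrec.simps[of "{#}"])
  qed
qed

lemma negX_eq: "cis_E_negX = negrec"
  unfolding cis_E_negX_def using mul_negrec negrec_unique by (rule the_equality)

lemma tilde_E: "cis_tilde cis_E = Abs_fps (\<lambda>n. 1)"
proof (rule fps_ext)
  fix n
  have "fps_nth (cis_tilde cis_E) n = csum 1 n"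
    unfolding tilde_nth csum_def by (intro sum.cong) (auto simp: cis_E_def parts_def)
  then show "fps_nth (cis_tilde cis_E) n = fps_nth (Abs_fps (\<lambda>n. 1)) n" by (simp add: csum_one)
qed

lemma tilde_negX: "cis_tilde cis_E_negX = 1 - fps_X"
proof -
  have "cis_tilde cis_E * cis_tilde cis_E_negX = 1"
    using mul_negrec negX_eq tilde_mul tilde_one by metis
  then have "inverse (1 - fps_X) * cis_tilde cis_E_negX = 1"
    using fps_inverse_one_minus_fps_X tilde_E by metis
  then have "(1 - fps_X) * (inverse (1 - fps_X) * cis_tilde cis_E_negX) = 1 - fps_X" by simp
  moreover have "(1 - fps_X) * inverse (1 - fps_X) = (1 :: rat fps)"
    by (rule inverse_mult_eq_1') simp
  ultimately show ?thesis by (simp add: mult.assoc[symmetric])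
qed

lemma tilde_E_range: "cis_tilde (cis_E_range a b) = Abs_fps (\<lambda>n. if a \<le> n \<and> n < b then 1 else 0)"
proof (rule fps_ext)
  fix n
  have "fps_nth (cis_tilde (cis_E_range a b)) n = (if a \<le> n \<and> n < b then csum 1 n else 0)"
    unfolding tilde_nth csum_def by (auto simp: cis_E_range_def parts_def intro!: sum.cong sum.neutral)
  then show "fps_nth (cis_tilde (cis_E_range a b)) n = fps_nth (Abs_fps (\<lambda>n. if a \<le> n \<and> n < b then 1 else 0)) n"
    by (simp add: csum_one)
qed


lemma trunc_eq: "Abs_fps (\<lambda>n. if n < k then 1 else 0) = (1 - fps_X^k) * inverse (1 - (fps_X :: rat fps))"
proof -
  have "(1 - fps_X^k) * inverse (1 - (fps_X :: rat fps)) = (1 - fps_X^k) * Abs_fps (\<lambda>n. 1)"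
    by (simp add: fps_inverse_one_minus_fps_X)
  also have "\<dots> = Abs_fps (\<lambda>n. if n < k then 1 else 0)"
    by (rule fps_ext) (simp add: left_diff_distrib fps_X_power_mult_nth)
  finally show ?thesis by simp
qed

lemma inv_cancel: "inverse (1 - (fps_X :: rat fps)) * (1 - fps_X) = 1"
  by (rule inverse_mult_eq_1) simp

lemma trunc_mul: "Abs_fps (\<lambda>n. if n < k then 1 else 0) * (1 - fps_X) = 1 - (fps_X :: rat fps)^k"
  unfolding trunc_eq by (simp add: mult.assoc inv_cancel)

lemma tilde_G: "cis_tilde (cis_mul cis_X (cis_diff (cis_mul (cis_comp (cis_E_less (1 + t)) cis_X) cis_E_negX) cis_one))
   = - (fps_X ^ (t + 2))"
proof -
  have "cis_tilde (cis_E_less (1 + t)) = Abs_fps (\<lambda>n. if n < 1 + t then 1 else 0)"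
    by (simp add: cis_E_less_def tilde_E_range)
  then have "cis_tilde (cis_mul cis_X (cis_diff (cis_mul (cis_comp (cis_E_less (1 + t)) cis_X) cis_E_negX) cis_one))
     = fps_X * (Abs_fps (\<lambda>n. if n < 1 + t then 1 else 0) * (1 - fps_X) - 1)"
    by (simp only: tilde_mul tilde_diff tilde_comp_X tilde_X tilde_negX tilde_one)
  also have "\<dots> = fps_X * (1 - fps_X ^ (1 + t) - 1)" by (simp only: trunc_mul)
  also have "\<dots> = - (fps_X ^ (t + 2))" by (simp add: algebra_simps)
  finally show ?thesis .
qed

lemma tilde_stretch_G:
  assumes k: "k > 0" and G: "cis_tilde G = - (fps_X ^ c)"
  shows "cis_tilde (cis_stretch k G) = - (fps_X ^ (k * c))"
proof (rule fps_ext)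
  fix n
  have "(k dvd n \<and> n div k = c) \<longleftrightarrow> n = k * c" using k by auto
  then show "fps_nth (cis_tilde (cis_stretch k G)) n = fps_nth (- (fps_X ^ (k * c))) n"
    by (auto simp: tilde_stretch[OF k] G)
qed

lemma prod_negX: "prod_list (map (\<lambda>k. - (fps_X ^ (k * c))) ks) = fps_const ((-1) ^ length ks) * (fps_X :: rat fps) ^ (c * sum_list ks)"
proof (induction ks)
  case Nil then show ?case by simp
next
  case (Cons k ks)
  have e1: "fps_const ((-1) ^ length (k # ks)) = - fps_const ((-1 :: rat) ^ length ks)" by simp
  have e2: "(fps_X :: rat fps) ^ (c * sum_list (k # ks)) = fps_X ^ (k * c) * fps_X ^ (c * sum_list ks)"
    by (simp add: power_add[symmetric] algebra_simps)
  have "- (fps_X ^ (k * c)) * (fps_const ((-1) ^ length ks) * (fps_X :: rat fps) ^ (c * sum_list ks))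
     = fps_const ((-1) ^ length (k # ks)) * fps_X ^ (c * sum_list (k # ks))"
    unfolding e1 e2 by (simp add: mult.left_commute fps_const_neg[symmetric] del: fps_const_neg)
  then show ?case using Cons by simp
qed

lemma tilde_comp_E_G:
  assumes G: "cis_tilde G = - (fps_X ^ c)" and c: "c > 0"
  shows "cis_tilde (cis_comp cis_E G) = 1 - (fps_X ^ c)"
proof (rule fps_ext)
  fix n
  let ?f = "\<lambda>m. cis_E m * ((-1) ^ size m * (if n = c * sum_mset m then 1 else 0))"
  have "fps_nth (cis_tilde (cis_comp cis_E G)) n = (\<Sum>m\<in>Ib n. ?f m)"
    unfolding tilde_comp
  proof (intro sum.cong refl)
    fix m assume m: "m \<in> Ib n"
    then have "\<forall>k\<in>set (sorted_list_of_multiset m). k > 0" by (auto simp: Ib_def)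
    then have "map (\<lambda>k. cis_tilde (cis_stretch k G)) (sorted_list_of_multiset m)
        = map (\<lambda>k. - (fps_X ^ (k * c))) (sorted_list_of_multiset m)"
      using tilde_stretch_G[OF _ G] by (intro map_cong) auto
    moreover have "length (sorted_list_of_multiset m) = size m"
      by (metis size_mset mset_sorted_list_of_multiset)
    moreover have "sum_list (sorted_list_of_multiset m) = sum_mset m"
      by (metis sum_mset_sum_list mset_sorted_list_of_multiset)
    ultimately have "prod_list (map (\<lambda>k. cis_tilde (cis_stretch k G)) (sorted_list_of_multiset m))
       = fps_const ((-1) ^ size m) * fps_X ^ (c * sum_mset m)"
      by (simp only: prod_negX)
    then show "cis_E m * fps_nth (prod_list (map (\<lambda>k. cis_tilde (cis_stretch k G)) (sorted_list_of_multiset m))) n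
        = ?f m"
      by (simp add: prod_negX)
  qed
  also have "\<dots> = (if c dvd n then csum (-1) (n div c) else 0)"
  proof (cases "c dvd n")
    case True
    have sub: "parts (n div c) \<subseteq> Ib n"
    proof -
      have "parts (n div c) \<subseteq> {m. set_mset m \<subseteq> {1..n div c} \<and> size m \<le> n div c}"
        using tilde_set[of "n div c"] by blast
      also have "\<dots> \<subseteq> Ib n"
      proof
        fix m assume "m \<in> {m. set_mset m \<subseteq> {1..n div c} \<and> size m \<le> n div c}"
        then have s1: "set_mset m \<subseteq> {1..n div c}" and "size m \<le> n div c" by auto
        have s2: "{1..n div c} \<subseteq> {1..n}" using div_le_dividend[of n c] by auto
        have "set_mset m \<subseteq> {1..n}" using s1 s2 by (rule order_trans)
        moreover have "size m \<le> n" using \<open>size m \<le> n div c\<close> div_le_dividend[of n c] by (rule le_trans)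
        ultimately show "m \<in> Ib n" unfolding Ib_def by blast
      qed
      finally show ?thesis .
    qed
    have "(\<Sum>m\<in>Ib n. ?f m) = (\<Sum>m\<in>parts (n div c). ?f m)"
    proof (rule sum.mono_neutral_right[OF finite_Ib sub])
      show "\<forall>m\<in>Ib n - parts (n div c). ?f m = 0"
      proof
        fix m assume "m \<in> Ib n - parts (n div c)"
        then have "0 \<in># m \<or> sum_mset m \<noteq> n div c" by (auto simp: parts_def)
        then show "?f m = 0"
        proof
          assume "0 \<in># m" then show ?thesis by (simp add: cis_E_def)
        next
          assume "sum_mset m \<noteq> n div c"
          then have "n \<noteq> c * sum_mset m" using c by auto
          then show ?thesis by simp
        qed
      qed
    qed
    also have "\<dots> = csum (-1) (n div c)"
      unfolding csum_def
    proof (intro sum.cong refl)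
      fix m assume "m \<in> parts (n div c)"
      then have "0 \<notin># m" "n = c * sum_mset m" using True by (auto simp: parts_def)
      then show "?f m = (-1) ^ size m / zee m" by (simp add: cis_E_def)
    qed
    finally show ?thesis using True by simp
  next
    case False
    then have "?f m = 0" for m by auto
    then have "(\<Sum>m\<in>Ib n. ?f m) = 0" by (intro sum.neutral) blast
    then show ?thesis using False by simp
  qed
  also have "\<dots> = fps_nth (1 - (fps_X ^ c)) n"
    using c by (auto simp: csum_neg elim!: dvdE)
  finally show "fps_nth (cis_tilde (cis_comp cis_E G)) n = fps_nth (1 - (fps_X ^ c)) n" .
qed

lemma part1: "cis_tilde (Q_XXX s t) =
           (1 - (fps_X ^ (s + 2))) * (1 - (fps_X ^ (t + 2))) * inverse (1 - fps_X) - 1"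
proof -
  have C: "cis_tilde (cis_comp cis_E (cis_mul cis_X (cis_diff (cis_mul (cis_comp (cis_E_less (1 + t)) cis_X) cis_E_negX) cis_one)))
     = 1 - (fps_X ^ (t + 2))"
    by (rule tilde_comp_E_G[OF tilde_G]) simp
  have A: "cis_tilde (cis_add (cis_add cis_one cis_X) (cis_comp (cis_E_range 2 (2 + s)) cis_X))
     = Abs_fps (\<lambda>n. if n < s + 2 then 1 else 0)"
    by (rule fps_ext) (auto simp: tilde_add tilde_one tilde_X tilde_comp_X tilde_E_range fps_one_nth)
  show ?thesis
    unfolding Q_XXX_def tilde_diff tilde_mul C A trunc_eq tilde_one
    by (simp add: algebra_simps)
qed

lemma part2: "cis_tilde (cis_diff (cis_diff (cis_mul cis_X cis_X)
                       (cis_smul (of_bool (t > 0)) (cis_mul cis_X cis_X)))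
                       (cis_smul (of_bool (s > 0)) (cis_comp (cis_E_n 2) cis_X)))
           = fps_X ^ 2 - of_bool (t > 0) * fps_X ^ 2 - of_bool (s > 0) * fps_X ^ 2"
proof -
  have E2: "cis_tilde (cis_comp (cis_E_n 2) cis_X) = fps_X ^ 2"
    by (rule fps_ext) (simp add: tilde_comp_X cis_E_n_def tilde_E_range)
  have sm: "fps_const (of_bool b) * F = of_bool b * F" for b and F :: "rat fps"
    by (cases b) simp_all
  show ?thesis
    by (simp add: tilde_diff tilde_smul tilde_mul tilde_X E2 sm power2_eq_square)
qed


theorem lemma4p5:
  fixes s t :: nat
  shows "(cis_tilde (Q_XXX s t) =
           (1 - fps_X ^ (s + 2)) * (1 - fps_X ^ (t + 2)) * inverse (1 - fps_X) - 1) \<and>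
         (cis_tilde (cis_diff (cis_diff (cis_mul cis_X cis_X)
                       (cis_smul (of_bool (t > 0)) (cis_mul cis_X cis_X)))
                       (cis_smul (of_bool (s > 0)) (cis_comp (cis_E_n 2) cis_X)))
           = fps_X ^ 2 - of_bool (t > 0) * fps_X ^ 2 - of_bool (s > 0) * fps_X ^ 2) \<and>
         (cis_tilde (Q_XXX s t) = cis_tilde (Q_XXX t s)) \<and>
         (cis_tilde (cis_diff (cis_diff (cis_mul cis_X cis_X)
                       (cis_smul (of_bool (t > 0)) (cis_mul cis_X cis_X)))
                       (cis_smul (of_bool (s > 0)) (cis_comp (cis_E_n 2) cis_X)))
         = cis_tilde (cis_diff (cis_diff (cis_mul cis_X cis_X)
                       (cis_smul (of_bool (s > 0)) (cis_mul cis_X cis_X)))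
                       (cis_smul (of_bool (t > 0)) (cis_comp (cis_E_n 2) cis_X))))"
  using part1[of s t] part1[of t s] part2[of t s] part2[of s t]
  by (simp add: mult_ac)

end
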